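(* Let $K$ be a finite field of characteristic $p$ and order $q$, let $s$ be a positive integer with $\gcd(s,q-1)=1$, let $k$ be a positive integer with $p\equiv1\pmod k$, let $\lambda$ be a primitive $k$th root of unity in $\mathbb{F}_p^\times$, and for $u\in K^\times$ let $\Omega_u=\sum_{i=0}^{k-1}W_{\lambda^iu}$. Then (i) $\sum_{u\in K^\times}\Omega_u^0=q-1$; (ii) $\sum_{u\in K^\times}\Omega_u=kq$; (iii) $\sum_{u\in K^\times}\Omega_u^2=kq^2$; (iv) if $k=2$, then $\sum_{u\in K^\times}\Omega_u^3=2q^2\big(V^{[1,1]}_1+3V^{[1,1]}_{-1}\big)$.
   Context: $\zeta=\exp(2\pi i/p)$, $\psi(x)=\zeta^{\mathrm{Tr}(x)}$ with $\mathrm{Tr}$ the absolute trace of $K$ to $\mathbb{F}_p$; $W_u=\sum_{x\in K}\psi(x^s-ux)$. Let $1/s$ denote the inverse of $s$ modulo $q-1$. For $a,b\in K$, $Q^{(1,1)}_{a,b}$ is the number of $(v_1,v_2)\in K^2$ with $v_1+v_2=a$ and $(v_1^s+v_2^s)^{1/s}=b$, and $V^{[1,1]}_u=Q^{(1,1)}_{1,u}-Q^{(1,1)}_{1,0}$ for $u\in K^\times$. *)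

theory Defs
  imports "HOL-Number_Theory.Number_Theory" "HOL-Library.Cardinality"
begin

text \<open>K is the finite field 'a; p = CHAR('a), q = CARD('a) = p^n.\<close>

definition ext_degree :: "'a::{field,finite} itself \<Rightarrow> nat" where
  "ext_degree (T::'a itself) = (THE n. CARD('a) = CHAR('a) ^ n)"

text \<open>Absolute trace K \<rightarrow> F_p (values in the prime subfield of K).\<close>
definition abs_trace :: "'a::{field,finite} \<Rightarrow> 'a" where
  "abs_trace x = (\<Sum>j<ext_degree TYPE('a). x ^ (CHAR('a) ^ j))"

definition trace_rep :: "'a::{field,finite} \<Rightarrow> nat" where
  "trace_rep x = (THE m. m < CHAR('a) \<and> of_nat m = abs_trace x)"

definition psi :: "'a::{field,finite} \<Rightarrow> complex" where
  "psi x = exp (2 * pi * \<i> * of_nat (trace_rep x) / of_nat CHAR('a))"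

definition W :: "nat \<Rightarrow> 'a::{field,finite} \<Rightarrow> complex" where
  "W s u = (\<Sum>x\<in>UNIV. psi (x ^ s - u * x))"

text \<open>1/s: the inverse of s modulo q-1 (a positive representative).\<close>
definition sinv :: "'a::{field,finite} itself \<Rightarrow> nat \<Rightarrow> nat" where
  "sinv (T::'a itself) s = (SOME t. t > 0 \<and> [s * t = 1] (mod (CARD('a) - 1)))"

definition Q11 :: "nat \<Rightarrow> 'a::{field,finite} \<Rightarrow> 'a \<Rightarrow> nat" where
  "Q11 s a b = card {(v1, v2). (v1::'a) + v2 = a \<and> (v1 ^ s + v2 ^ s) ^ (sinv TYPE('a) s) = b}"

definition V11 :: "nat \<Rightarrow> 'a::{field,finite} \<Rightarrow> int" where
  "V11 s u = int (Q11 s 1 u) - int (Q11 s 1 (0::'a))"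

definition Omega :: "nat \<Rightarrow> nat \<Rightarrow> 'a::{field,finite} \<Rightarrow> 'a \<Rightarrow> complex" where
  "Omega s k lam u = (\<Sum>i<k. W s (lam ^ i * u))"

end

theory Submission imports Defs "HOL-Algebra.Sylow" "HOL-Analysis.Complex_Transcendental" "HOL-Computational_Algebra.Polynomial"
begin

lemma card_ge2: "2 \<le> CARD('a::{field,finite})"
proof -
  have "card {0::'a, 1} \<le> CARD('a)" by (rule card_mono) auto
  then show ?thesis by simp
qed

lemma prime_char: "prime CHAR('a::{field,finite})"
  by (intro prime_CHAR_semidom finite_imp_CHAR_pos) simp

lemma pow_card: "(x::'a::{field,finite}) ^ CARD('a) = x"
proof (cases "x = 0")
  case False
  have "x * (\<Prod>y\<in>UNIV-{0}. x * y) = x * x ^ (card (UNIV :: 'a set) - 1) * \<Prod>(UNIV-{0})"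
    by (simp add: prod.distrib mult_ac)
  also have "x * x ^ (card (UNIV :: 'a set) - 1) = x ^ Suc (card (UNIV :: 'a set) - 1)"
    by (subst power_Suc) auto
  also have "Suc (card (UNIV :: 'a set) - 1) = card (UNIV :: 'a set)"
    using finite_UNIV_card_ge_0[where ?'a = 'a] by simp
  also have "(\<Prod>y\<in>UNIV-{0}. x * y) = (\<Prod>y\<in>UNIV-{0}. y)"
    by (rule prod.reindex_bij_witness[of _ "\<lambda>y. y / x" "\<lambda>y. x * y"]) (use False in auto)
  finally show ?thesis
    by simp
qed (use finite_UNIV_card_ge_0[where ?'a = 'a] in auto)

lemma pow_card1: "(x::'a::{field,finite}) \<noteq> 0 \<Longrightarrow> x ^ (CARD('a) - 1) = 1"
proof -
  assume x: "x \<noteq> 0"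
  obtain c where c: "CARD('a) = Suc c" using card_ge2[where 'a='a]
    by (metis Suc_le_D numeral_2_eq_2)
  have "x * x ^ (CARD('a) - 1) = x ^ CARD('a)" by (simp add: c)
  also have "x ^ CARD('a) = x * 1" by (simp add: pow_card)
  finally show ?thesis using x by simp
qed

lemma char_only_prime:
  assumes r: "prime r" "r dvd CARD('a::{field,finite})"
  shows "r = CHAR('a)"
proof -
  define G where "G = \<lparr> carrier = (UNIV :: 'a set), monoid.mult = (+), one = (0 :: 'a) \<rparr>"
  interpret group G
  proof (rule groupI)
    fix x assume x: "x \<in> carrier G"
    show "\<exists>y\<in>carrier G. y \<otimes>\<^bsub>G\<^esub> x = \<one>\<^bsub>G\<^esub>"
      by (intro bexI[of _ "-x"]) (auto simp: G_def)
  qed (auto simp: G_def add_ac)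
  obtain m where m: "CARD('a) = r ^ 1 * m" using r(2) by auto
  have "group G" ..
  moreover have "Coset.order G = r ^ 1 * m" using m by (simp add: Coset.order_def G_def)
  ultimately obtain H where H: "subgroup H G" "card H = r"
    using sylow_thm[OF r(1), of G 1 m] by (auto simp: G_def)
  have add: "x + y \<in> H" if "x \<in> H" "y \<in> H" for x y
    using subgroup.m_closed[OF H(1) that] by (simp add: G_def)
  have fin: "finite H" by simp
  have "card H \<ge> 2" using H(2) r(1) prime_ge_2_nat by auto
  then have "\<exists>x\<in>H. x \<noteq> 0"
    by (metis One_nat_def card_1_singletonE card_le_Suc0_iff_eq fin not_less_eq_eq numeral_2_eq_2)
  then obtain x where x: "x \<in> H" "x \<noteq> 0" by blast
  have img: "(\<lambda>y. x + y) ` H = H"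
    by (rule endo_inj_surj) (use add x in \<open>auto simp: inj_on_def\<close>)
  have "(\<Sum>y\<in>H. y) = (\<Sum>y\<in>H. x + y)"
    using sum.reindex[of "\<lambda>y. x + y" H "\<lambda>y. y"] img by (simp add: inj_on_def)
  also have "\<dots> = of_nat r * x + (\<Sum>y\<in>H. y)"
    by (simp add: sum.distrib H(2))
  finally have "of_nat r * x = 0" by simp
  then have "of_nat r = (0::'a)" using x by simp
  then have "CHAR('a) dvd r" by (simp add: of_nat_eq_0_iff_char_dvd)
  then show ?thesis using r(1) prime_char[where 'a='a]
    using primes_dvd_imp_eq by metis
qed

lemma only_prime_factor_power:
  fixes n p :: nat
  shows "n > 0 \<Longrightarrow> (\<And>r. prime r \<Longrightarrow> r dvd n \<Longrightarrow> r = p) \<Longrightarrow> \<exists>k. n = p ^ k"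
proof (induction n rule: less_induct)
  case (less n)
  show ?case
  proof (cases "n = 1")
    case True then show ?thesis by (intro exI[of _ 0]) simp
  next
    case False
    then obtain r where r: "prime r" "r dvd n" using prime_factor_nat by blast
    then have rp: "r = p" using less by blast
    obtain m where m: "n = r * m" using r by (auto elim: dvdE)
    have "m > 0" using less(2) m by auto
    moreover have "m < n" using m r less(2) prime_gt_1_nat by auto
    moreover have "\<And>r'. prime r' \<Longrightarrow> r' dvd m \<Longrightarrow> r' = p" using less(3) m by auto
    ultimately obtain k where "m = p ^ k" using less(1) by blast
    then show ?thesis using m rp by (intro exI[of _ "Suc k"]) simp
  qed
qed

lemma card_prime_power: "\<exists>n. CARD('a::{field,finite}) = CHAR('a) ^ n"
  by (rule only_prime_factor_power) (auto intro: char_only_prime)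


lemma ext_degree: "CARD('a::{field,finite}) = CHAR('a) ^ ext_degree TYPE('a)"
proof -
  have p1: "1 < CHAR('a)" using prime_char[where 'a='a] prime_gt_1_nat by blast
  obtain n where n: "CARD('a) = CHAR('a) ^ n" using card_prime_power by blast
  have "\<exists>!n. CARD('a) = CHAR('a) ^ n"
    using n power_inject_exp[OF p1] by metis
  then show ?thesis unfolding ext_degree_def by (rule theI')
qed

lemma ext_degree_pos: "ext_degree TYPE('a::{field,finite}) \<ge> 1"
proof (rule ccontr)
  assume "\<not> ?thesis"
  then have "CARD('a) = 1" using ext_degree[where 'a='a] by simp
  then show False using card_ge2[where 'a='a] by simp
qed

lemma abs_trace_add: "abs_trace (x + y :: 'a::{field,finite}) = abs_trace x + abs_trace y"
  unfolding abs_trace_def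
  by (simp add: sum.distrib freshmans_dream'[OF prime_char])

lemma of_nat_pow_char: "(of_nat m :: 'a::{field,finite}) ^ CHAR('a) = of_nat m"
proof (induction m)
  case 0 then show ?case using prime_char[where 'a='a] by (simp add: prime_gt_0_nat)
next
  case (Suc m)
  have "(of_nat (Suc m) :: 'a) ^ CHAR('a) = (of_nat m + 1) ^ CHAR('a)" by (simp add: add.commute)
  also have "\<dots> = of_nat m ^ CHAR('a) + 1 ^ CHAR('a)"
    by (rule freshmans_dream[OF prime_char refl])
  finally show ?case using Suc by simp
qed

lemma abs_trace_pow: "abs_trace (x::'a::{field,finite}) ^ CHAR('a) = abs_trace x"
proof -
  define n where "n = ext_degree TYPE('a)"
  define f where "f j = x ^ (CHAR('a) ^ j)" for j
  have "abs_trace x ^ CHAR('a) = (\<Sum>j<n. f j ^ CHAR('a))"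
    unfolding abs_trace_def n_def f_def by (rule freshmans_dream_sum[OF prime_char refl])
  also have "\<dots> = (\<Sum>j<n. f (Suc j))"
    by (simp add: f_def power_mult[symmetric] mult.commute)
  also have "\<dots> = (\<Sum>j<n. f j)"
  proof -
    have "(\<Sum>j<Suc n. f j) = f 0 + (\<Sum>j<n. f (Suc j))" by (rule sum.lessThan_Suc_shift)
    moreover have "(\<Sum>j<Suc n. f j) = (\<Sum>j<n. f j) + f n" by simp
    moreover have "f n = f 0"
      unfolding f_def n_def using ext_degree[where 'a='a] pow_card[of x] by simp
    ultimately show ?thesis by (simp add: add.commute)
  qed
  finally show ?thesis unfolding abs_trace_def n_def f_def .
qed

lemma prime_subfield:
  assumes y: "(y::'a::{field,finite}) ^ CHAR('a) = y"
  shows "\<exists>m<CHAR('a). y = of_nat m"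
proof (rule ccontr)
  assume no: "\<not> ?thesis"
  define p where "p = CHAR('a)"
  have p2: "p \<ge> 2" unfolding p_def using prime_char[where 'a='a] prime_ge_2_nat by blast
  define P :: "'a poly" where "P = monom 1 p - [:0, 1:]"
  have evalP: "poly P z = z ^ p - z" for z by (simp add: P_def poly_monom)
  have "coeff P p = 1" using p2 by (simp add: P_def coeff_pCons split: nat.split)
  then have P0: "P \<noteq> 0" by auto
  have degP: "degree P \<le> p" unfolding P_def
    by (rule degree_diff_le) (use p2 in \<open>auto intro: degree_monom_le simp: degree_pCons_eq_if\<close>)
  have sub: "insert y (of_nat ` {..<p}) \<subseteq> {z. poly P z = 0}"
    using y of_nat_pow_char by (auto simp: evalP p_def)
  have inj: "inj_on (of_nat :: nat \<Rightarrow> 'a) {..<p}"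
    by (auto simp: inj_on_def of_nat_eq_iff_cong_CHAR cong_def p_def)
  have "card (insert y (of_nat ` {..<p})) = Suc p"
    using no inj by (subst card_insert_disjoint) (auto simp: card_image p_def)
  also have "\<dots> > degree P" using degP by simp
  finally have "card {z. poly P z = 0} > degree P"
    using card_mono[OF _ sub] by (meson finite leD leI order_trans)
  then show False using card_poly_roots_bound[OF P0] by simp
qed

lemma trace_nontrivial: "\<exists>x::'a::{field,finite}. abs_trace x \<noteq> 0"
proof (rule ccontr)
  assume "\<not> ?thesis"
  then have all: "abs_trace x = 0" for x::'a by blast
  define p where "p = CHAR('a)"
  define n where "n = ext_degree TYPE('a)"
  have p2: "p \<ge> 2" unfolding p_def using prime_char[where 'a='a] prime_ge_2_nat by blast
  have n1: "n \<ge> 1" unfolding n_def by (rule ext_degree_pos)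
  define P :: "'a poly" where "P = (\<Sum>j<n. monom 1 (p ^ j))"
  have evalP: "poly P z = abs_trace z" for z
    by (simp add: P_def poly_sum poly_monom abs_trace_def p_def n_def)
  have "coeff P (p ^ (n - 1)) = (\<Sum>j<n. if p ^ j = p ^ (n - 1) then 1 else 0)"
    by (simp add: P_def coeff_sum)
  also have "\<dots> = (\<Sum>j<n. if j = n - 1 then 1 else 0)"
    using p2 by (intro sum.cong refl) (simp add: power_inject_exp)
  also have "\<dots> = 1" using n1 by simp
  finally have P0: "P \<noteq> 0" by auto
  have degP: "degree P \<le> p ^ (n - 1)" unfolding P_def
  proof (rule degree_sum_le)
    fix j assume "j \<in> {..<n}"
    then have "p ^ j \<le> p ^ (n - 1)" using p2 by (intro power_increasing) auto
    then show "degree (monom (1::'a) (p ^ j)) \<le> p ^ (n - 1)"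
      using degree_monom_le order_trans by blast
  qed simp
  have "{z. poly P z = 0} = UNIV" using all evalP by auto
  then have "CARD('a) \<le> p ^ (n - 1)" using card_poly_roots_bound[OF P0] degP by simp
  moreover have "CARD('a) = p ^ n" using ext_degree[where 'a='a] by (simp add: p_def n_def)
  moreover have "p ^ (n - 1) < p ^ n" using p2 n1 by (intro power_strict_increasing) auto
  ultimately show False by simp
qed

lemma trace_rep: "trace_rep (x::'a::{field,finite}) < CHAR('a) \<and> of_nat (trace_rep x) = abs_trace x"
proof -
  have "\<exists>!m. m < CHAR('a) \<and> of_nat m = abs_trace x"
  proof -
    obtain m where "m < CHAR('a)" "abs_trace x = of_nat m"
      using prime_subfield[OF abs_trace_pow] by blast
    moreover have "m' = m" if "m' < CHAR('a)" "of_nat m' = abs_trace x" "m < CHAR('a)" "of_nat m = abs_trace x" for m m'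
    proof -
      have "(of_nat m' :: 'a) = of_nat m" using that by simp
      then have "m' mod CHAR('a) = m mod CHAR('a)" by (simp add: of_nat_eq_iff_cong_CHAR cong_def)
      then show ?thesis using that by simp
    qed
    ultimately show ?thesis by metis
  qed
  then show ?thesis unfolding trace_rep_def by (rule theI')
qed


lemma exp_mod_p:
  assumes "p > 0"
  shows "exp (2 * pi * \<i> * of_nat (m mod p) / of_nat p) = exp (2 * pi * \<i> * of_nat m / of_nat p)"
proof -
  have m: "of_nat m = (of_nat (m mod p) + of_nat p * of_nat (m div p) :: complex)"
    by (metis of_nat_add of_nat_mult mod_mult_div_eq add.commute mult.commute)
  have "2 * pi * \<i> * of_nat m / of_nat p
      = 2 * pi * \<i> * of_nat (m mod p) / of_nat p + (2 * of_nat (m div p) * pi) * \<i>"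
    using assms by (subst m) (simp add: field_simps)
  then have "exp (2 * pi * \<i> * of_nat m / of_nat p)
      = exp (2 * pi * \<i> * of_nat (m mod p) / of_nat p) * exp ((2 * of_nat (m div p) * pi) * \<i>)"
    by (simp add: exp_add)
  also have "exp ((2 * of_nat (m div p) * pi) * \<i>) = 1"
    by (rule exp_integer_2pi) simp
  finally show ?thesis by simp
qed

lemma psi_add: "psi (x + y :: 'a::{field,finite}) = psi x * psi y"
proof -
  define p where "p = CHAR('a)"
  have p0: "p > 0" unfolding p_def using prime_char[where 'a='a] prime_gt_0_nat by blast
  have "(of_nat (trace_rep (x + y)) :: 'a) = of_nat (trace_rep x + trace_rep y)"
    using trace_rep[of "x+y"] trace_rep[of x] trace_rep[of y] abs_trace_add[of x y] by simp
  then have "[trace_rep (x + y) = trace_rep x + trace_rep y] (mod p)"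
    unfolding p_def by (rule of_nat_eq_iff_cong_CHAR[THEN iffD1])
  then have "trace_rep (x + y) mod p = (trace_rep x + trace_rep y) mod p"
    by (simp add: cong_def)
  then have c: "trace_rep (x + y) = (trace_rep x + trace_rep y) mod p"
    using trace_rep[of "x+y"] by (simp add: p_def)
  have "psi x * psi y = exp (2 * pi * \<i> * of_nat (trace_rep x + trace_rep y) / of_nat p)"
    unfolding psi_def p_def by (simp add: exp_add[symmetric] add_divide_distrib distrib_left)
  also have "\<dots> = psi (x + y)"
    unfolding psi_def c using exp_mod_p[OF p0] by (simp add: p_def)
  finally show ?thesis by simp
qed

lemma psi_0: "psi (0::'a::{field,finite}) = 1"
proof -
  have "psi ((0::'a) + 0) = psi (0::'a) * psi (0::'a)" by (rule psi_add)
  then have "psi (0::'a) = psi (0::'a) * psi (0::'a)" by simp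
  moreover have "psi (0::'a) \<noteq> 0" by (simp add: psi_def)
  ultimately show ?thesis by (metis mult_cancel_left1)
qed

lemma psi_nontriv: "\<exists>x::'a::{field,finite}. psi x \<noteq> 1"
proof -
  obtain x :: 'a where x: "abs_trace x \<noteq> 0" using trace_nontrivial by blast
  define p where "p = CHAR('a)"
  define m where "m = trace_rep x"
  have p0: "p > 0" unfolding p_def using prime_char[where 'a='a] prime_gt_0_nat by blast
  have m: "0 < m" "m < p" using trace_rep[of x] x by (auto simp: m_def p_def intro: Nat.gr0I)
  have "psi x \<noteq> 1"
  proof
    assume "psi x = 1"
    then have "exp (2 * pi * \<i> * of_nat m / of_nat p) = 1" by (simp add: psi_def m_def p_def)
    then obtain n :: int where n: "Im (2 * pi * \<i> * of_nat m / of_nat p) = of_int (2 * n) * pi"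
      by (auto simp: exp_eq_1)
    have "Im (2 * pi * \<i> * of_nat m / of_nat p) = 2 * pi * real m / real p"
      by (simp add: Im_divide_of_nat)
    with n have "2 * pi * real m / real p = 2 * real_of_int n * pi" by simp
    then have "real m = real_of_int n * real p" using p0 by (simp add: field_simps)
    then have "int m = n * int p" by (metis of_int_eq_iff of_int_mult of_int_of_nat_eq)
    show False
    proof (cases "n \<le> 0")
      case True
      then have "n * int p \<le> 0" by (simp add: mult_nonpos_nonneg)
      then show False using m \<open>int m = n * int p\<close> by simp
    next
      case False
      then have "n * int p \<ge> 1 * int p" using mult_right_mono[of 1 n "int p"] by simp
      then show False using m \<open>int m = n * int p\<close> by linarith
    qed
  qed
  then show ?thesis by blast
qed

lemma sum_psi: "(\<Sum>x\<in>UNIV. psi (x::'a::{field,finite})) = 0"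
proof -
  obtain x0 :: 'a where x0: "psi x0 \<noteq> 1" using psi_nontriv by blast
  have "(\<Sum>x\<in>UNIV. psi (x::'a)) = (\<Sum>x\<in>UNIV. psi (x0 + x))"
    by (rule sum.reindex_bij_witness[of _ "\<lambda>y. x0 + y" "\<lambda>y. y - x0"]) auto
  also have "\<dots> = psi x0 * (\<Sum>x\<in>UNIV. psi (x::'a))" by (simp add: psi_add sum_distrib_left)
  finally have "(psi x0 - 1) * (\<Sum>x\<in>UNIV. psi (x::'a)) = 0" by (simp add: algebra_simps)
  then show ?thesis using x0 by simp
qed

lemma orth: "(\<Sum>u\<in>UNIV. psi (u * (y::'a::{field,finite}))) = (if y = 0 then of_nat CARD('a) else 0)"
proof (cases "y = 0")
  case True then show ?thesis by (simp add: psi_0)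
next
  case False
  have "(\<Sum>u\<in>UNIV. psi (u * y)) = (\<Sum>u\<in>UNIV. psi (u::'a))"
    by (rule sum.reindex_bij_witness[of _ "\<lambda>v. v / y" "\<lambda>u. u * y"]) (use False in auto)
  then show ?thesis using False sum_psi by simp
qed


context
  fixes s :: nat and TT :: "'a::{field,finite} itself"
  assumes s0: "s > 0" and cop: "coprime s (CARD('a) - 1)"
begin

lemma sinv_ex: "\<exists>t. t > 0 \<and> [s * t = 1] (mod (CARD('a) - 1))"
proof -
  define m where "m = CARD('a) - 1"
  obtain x where x: "[s * x = 1] (mod m)" using cong_solve_coprime_nat[OF cop] by (auto simp: m_def)
  have q1: "m \<ge> 1" using card_ge2[where 'a='a] by (simp add: m_def)
  have "[s * (x + m) = s * x] (mod m)"
    by (simp add: distrib_left cong_def)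
  then have "[s * (x + m) = 1] (mod m)" using x by (rule cong_trans)
  moreover have "x + m > 0" using q1 by simp
  ultimately show ?thesis unfolding m_def by blast
qed

lemma sinv_props: "sinv TYPE('a) s > 0 \<and> [s * sinv TYPE('a) s = 1] (mod (CARD('a) - 1))"
  unfolding sinv_def using someI_ex[OF sinv_ex] .

lemma pow_cong1:
  assumes e: "e > 0" "[e = 1] (mod (CARD('a) - 1))"
  shows "(x::'a) ^ e = x"
proof (cases "x = 0")
  case True then show ?thesis using e by simp
next
  case False
  obtain j where j: "e = j * (CARD('a) - 1) + 1" using e cong_le_nat[of 1 e] by auto
  have "x ^ e = x ^ ((CARD('a) - 1) * j) * x" by (simp add: j mult.commute)
  also have "\<dots> = (x ^ (CARD('a) - 1)) ^ j * x" by (simp only: power_mult)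
  also have "\<dots> = x" using pow_card1[OF False] by simp
  finally show ?thesis .
qed

lemma pow_inv1: "((x::'a) ^ s) ^ sinv TYPE('a) s = x"
  unfolding power_mult[symmetric] using sinv_props s0 by (intro pow_cong1) auto

lemma pow_inv2: "((x::'a) ^ sinv TYPE('a) s) ^ s = x"
  unfolding power_mult[symmetric] using sinv_props s0 by (intro pow_cong1) (auto simp: mult.commute)

lemma pow_inj: "((x::'a) ^ s = y ^ s) \<longleftrightarrow> x = y"
  by (metis pow_inv1)

lemma sum_pow_reindex: "(\<Sum>x\<in>UNIV. f ((x::'a) ^ s)) = (\<Sum>x\<in>UNIV. f x)"
  by (rule sum.reindex_bij_witness[of _ "\<lambda>y. y ^ sinv TYPE('a) s" "\<lambda>x. x ^ s"])
     (auto simp: pow_inv1 pow_inv2)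

lemma neg1_pow: "(-1::'a) ^ s = -1"
proof -
  define z where "z = (-1::'a) ^ s"
  have "z * z = 1" unfolding z_def by (simp add: power_mult_distrib[symmetric])
  then have "(z - 1) * (z + 1) = 0" by (simp add: algebra_simps)
  then have "z = 1 \<or> z = -1" by (auto simp: add_eq_0_iff2)
  moreover have "z = 1 \<Longrightarrow> (-1::'a) = 1"
    using pow_inj[of "-1" 1] unfolding z_def by simp
  ultimately show ?thesis unfolding z_def by auto
qed

lemma neg_pow: "(-(x::'a)) ^ s = - (x ^ s)"
proof -
  have "(-x) ^ s = ((-1) * x) ^ s" by simp
  also have "\<dots> = - (x ^ s)" by (simp only: power_mult_distrib neg1_pow) simp
  finally show ?thesis .
qed

lemma gauss0: "(\<Sum>x\<in>UNIV. psi (c * (x::'a) ^ s)) = (if c = 0 then of_nat CARD('a) else 0)"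
proof -
  have "(\<Sum>x\<in>UNIV. psi (c * (x::'a) ^ s)) = (\<Sum>x\<in>UNIV. psi (x * c))"
    using sum_pow_reindex[of "\<lambda>y. psi (c * y)"] by (simp add: mult.commute)
  then show ?thesis by (simp add: orth)
qed


lemma psi_add3: "psi (A + B + C :: 'a) = psi A * psi B * psi C"
  by (simp add: psi_add)

lemma W0: "W s (0::'a) = 0"
  using gauss0[of 1] by (simp add: W_def)

lemma sum_nz: "f (0::'a) = 0 \<Longrightarrow> (\<Sum>u\<in>UNIV-{0}. f u) = (\<Sum>u\<in>UNIV. f u)"
  by (rule sum.mono_neutral_left) auto

lemma sum_scale: "(c::'a) \<noteq> 0 \<Longrightarrow> (\<Sum>u\<in>UNIV. f (c * u)) = (\<Sum>u\<in>UNIV. f u)"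
  by (rule sum.reindex_bij_witness[of _ "\<lambda>v. v / c" "\<lambda>u. c * u"]) auto

lemma delta_sum: "(\<Sum>y\<in>UNIV. if y = (c::'a) then g y else 0) = g c"
  by (simp add: sum.delta)

lemma sum1: "(\<Sum>u\<in>UNIV. W s (u::'a)) = of_nat CARD('a)"
proof -
  have "(\<Sum>u\<in>UNIV. W s (u::'a)) = (\<Sum>u\<in>UNIV. \<Sum>x\<in>UNIV. psi (x ^ s) * psi ((u::'a) * (- x)))"
  proof -
    have pt1: "psi (x ^ s - u * x) = psi (x ^ s) * psi (u * (- x))" for x u :: 'a
      by (simp add: psi_add[symmetric])
    show ?thesis unfolding W_def by (simp only: pt1)
  qed
  also have "\<dots> = (\<Sum>x\<in>UNIV. \<Sum>u\<in>UNIV. psi (x ^ s) * psi ((u::'a) * (- x)))" by (rule sum.swap)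
  also have "\<dots> = (\<Sum>x\<in>UNIV. psi (x ^ s) * (if (x::'a) = 0 then of_nat CARD('a) else 0))"
    by (simp only: sum_distrib_left[symmetric] orth neg_equal_0_iff_equal)
  also have "\<dots> = (\<Sum>x\<in>UNIV. if (x::'a) = 0 then psi (x ^ s) * of_nat CARD('a) else 0)"
    by (intro sum.cong refl) simp
  also have "\<dots> = of_nat CARD('a)" using s0 by (simp add: sum.delta psi_0 zero_power[OF s0])
  finally show ?thesis .
qed

lemma sum2:
  assumes a: "(a::'a) \<noteq> 0" and b: "b \<noteq> 0"
  shows "(\<Sum>u\<in>UNIV. W s (a * u) * W s (b * u)) = (if a = b then of_nat CARD('a) ^ 2 else 0)"
proof -
  define Q :: complex where "Q = of_nat CARD('a)"
  define c where "c = (a / b) ^ s"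
  have pt: "psi (x ^ s - a * u * x) * psi (y ^ s - b * u * y) = psi (x ^ s) * psi (y ^ s) * psi (u * (- (a * x + b * y)))" for x y u
    by (simp only: psi_add[symmetric]) (rule arg_cong[where f=psi], simp add: algebra_simps)
  have "(\<Sum>u\<in>UNIV. W s (a * u) * W s (b * u))
      = (\<Sum>u\<in>UNIV. \<Sum>x\<in>UNIV. \<Sum>y\<in>UNIV. psi (x ^ s) * psi (y ^ s) * psi (u * (- (a * x + b * y))))"
    unfolding W_def sum_product by (simp only: pt)
  also have "\<dots> = (\<Sum>x\<in>UNIV. \<Sum>u\<in>UNIV. \<Sum>y\<in>UNIV. psi (x ^ s) * psi (y ^ s) * psi (u * (- (a * x + b * y))))"
    by (rule sum.swap)
  also have "\<dots> = (\<Sum>x\<in>UNIV. \<Sum>y\<in>UNIV. \<Sum>u\<in>UNIV. psi (x ^ s) * psi (y ^ s) * psi (u * (- (a * x + b * y))))"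
    by (intro sum.cong refl sum.swap)
  also have "\<dots> = (\<Sum>x\<in>UNIV. \<Sum>y\<in>UNIV. psi (x ^ s) * psi (y ^ s) * (if a * x + b * y = 0 then Q else 0))"
  proof (intro sum.cong refl)
    fix x y :: 'a
    have "(\<Sum>u\<in>UNIV. psi (x ^ s) * psi (y ^ s) * psi (u * (- (a * x + b * y))))
       = psi (x ^ s) * psi (y ^ s) * (\<Sum>u\<in>UNIV. psi (u * (- (a * x + b * y))))"
      by (rule sum_distrib_left[symmetric])
    also have "\<dots> = psi (x ^ s) * psi (y ^ s) * (if - (a * x + b * y) = 0 then Q else 0)"
      by (simp only: orth Q_def)
    also have "(- (a * x + b * y) = 0) = (a * x + b * y = 0)" by (rule neg_equal_0_iff_equal)
    finally show "(\<Sum>u\<in>UNIV. psi (x ^ s) * psi (y ^ s) * psi (u * (- (a * x + b * y))))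
       = psi (x ^ s) * psi (y ^ s) * (if a * x + b * y = 0 then Q else 0)" .
  qed
  also have "\<dots> = (\<Sum>x\<in>UNIV. \<Sum>y\<in>UNIV. if y = - (a * x) / b then psi (x ^ s) * psi (y ^ s) * Q else 0)"
  proof (intro sum.cong refl)
    fix x y :: 'a
    have "(a * x + b * y = 0) = (y = - (a * x) / b)" using b
      by (auto simp: field_simps) (metis add.commute eq_neg_iff_add_eq_0)
    then show "psi (x ^ s) * psi (y ^ s) * (if a * x + b * y = 0 then Q else 0) = (if y = - (a * x) / b then psi (x ^ s) * psi (y ^ s) * Q else 0)"
      by simp
  qed
  also have "\<dots> = (\<Sum>x\<in>UNIV. psi (x ^ s) * psi ((- (a * x) / b) ^ s) * Q)"
    by (simp add: sum.delta)
  also have "\<dots> = (\<Sum>x\<in>UNIV. psi ((1 - c) * x ^ s) * Q)"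
  proof (intro sum.cong refl)
    fix x :: 'a
    have "(- (a * x) / b) ^ s = - (c * x ^ s)"
    proof -
      have "- (a * x) / b = - ((a / b) * x)" by simp
      then show ?thesis by (simp only: neg_pow power_mult_distrib c_def)
    qed
    then have "psi (x ^ s) * psi ((- (a * x) / b) ^ s) = psi ((1 - c) * x ^ s)"
      by (simp add: psi_add[symmetric] algebra_simps)
    then show "psi (x ^ s) * psi ((- (a * x) / b) ^ s) * Q = psi ((1 - c) * x ^ s) * Q" by simp
  qed
  also have "\<dots> = (if c = 1 then Q else 0) * Q"
    by (simp add: sum_distrib_right[symmetric] gauss0 Q_def)
  also have "(c = 1) = (a = b)"
  proof -
    have "(c = 1) = ((a / b) ^ s = 1 ^ s)" by (simp add: c_def)
    also have "\<dots> = (a / b = 1)" by (rule pow_inj)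
    also have "\<dots> = (a = b)" using b by simp
    finally show ?thesis .
  qed
  finally show ?thesis by (simp add: Q_def power2_eq_square)
qed


lemma sum3:
  assumes c: "(c::'a) \<noteq> 0"
  shows "(\<Sum>u\<in>UNIV. W s u * W s u * W s (c * u))
       = of_nat CARD('a) * (\<Sum>x\<in>UNIV. \<Sum>y\<in>UNIV. psi (x ^ s) * psi (y ^ s) * psi ((- (x + y) / c) ^ s))"
proof -
  define Q :: complex where "Q = of_nat CARD('a)"
  define F where "F u x y z = psi (x ^ s) * psi (y ^ s) * psi (z ^ s) * psi (u * (- (x + y + c * z)))" for u x y z :: 'a
  have pt: "psi (x ^ s - u * x) * psi (y ^ s - u * y) * psi (z ^ s - c * u * z) = F u x y z" for x y z u :: 'a
    unfolding F_def
    by (simp only: psi_add[symmetric]) (rule arg_cong[where f=psi], simp add: algebra_simps)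
  have prod3: "sum f A * sum g B * sum h C = (\<Sum>x\<in>A. \<Sum>y\<in>B. \<Sum>z\<in>C. f x * g y * h z)"
    for f g h :: "'a \<Rightarrow> complex" and A B C
  proof -
    have "sum f A * sum g B * sum h C = (\<Sum>x\<in>A. \<Sum>y\<in>B. f x * g y) * sum h C"
      by (simp only: sum_product)
    also have "\<dots> = (\<Sum>x\<in>A. \<Sum>y\<in>B. f x * g y * sum h C)"
      by (simp only: sum_distrib_right)
    also have "\<dots> = (\<Sum>x\<in>A. \<Sum>y\<in>B. \<Sum>z\<in>C. f x * g y * h z)"
      by (simp only: sum_distrib_left)
    finally show ?thesis .
  qed
  have "(\<Sum>u\<in>UNIV. W s u * W s u * W s (c * u)) = (\<Sum>u\<in>UNIV. \<Sum>x\<in>UNIV. \<Sum>y\<in>UNIV. \<Sum>z\<in>UNIV. F u x y z)"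
    unfolding W_def prod3 by (simp only: pt)
  also have "\<dots> = (\<Sum>x\<in>UNIV. \<Sum>u\<in>UNIV. \<Sum>y\<in>UNIV. \<Sum>z\<in>UNIV. F u x y z)"
    by (rule sum.swap)
  also have "\<dots> = (\<Sum>x\<in>UNIV. \<Sum>y\<in>UNIV. \<Sum>u\<in>UNIV. \<Sum>z\<in>UNIV. F u x y z)"
    by (intro sum.cong refl sum.swap)
  also have "\<dots> = (\<Sum>x\<in>UNIV. \<Sum>y\<in>UNIV. \<Sum>z\<in>UNIV. \<Sum>u\<in>UNIV. F u x y z)"
    by (intro sum.cong refl sum.swap)
  also have "\<dots> = (\<Sum>x\<in>UNIV. \<Sum>y\<in>UNIV. \<Sum>z\<in>UNIV. psi (x ^ s) * psi (y ^ s) * psi (z ^ s) * (if x + y + c * z = 0 then Q else 0))"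
  proof (intro sum.cong refl)
    fix x y z :: 'a
    have "(\<Sum>u\<in>UNIV. F u x y z) = psi (x ^ s) * psi (y ^ s) * psi (z ^ s) * (\<Sum>u\<in>UNIV. psi (u * (- (x + y + c * z))))"
      unfolding F_def by (rule sum_distrib_left[symmetric])
    also have "\<dots> = psi (x ^ s) * psi (y ^ s) * psi (z ^ s) * (if - (x + y + c * z) = 0 then Q else 0)"
      by (simp only: orth Q_def)
    also have "(- (x + y + c * z) = 0) = (x + y + c * z = 0)" by (rule neg_equal_0_iff_equal)
    finally show "(\<Sum>u\<in>UNIV. F u x y z) = psi (x ^ s) * psi (y ^ s) * psi (z ^ s) * (if x + y + c * z = 0 then Q else 0)" .
  qed
  also have "\<dots> = (\<Sum>x\<in>UNIV. \<Sum>y\<in>UNIV. \<Sum>z\<in>UNIV. if z = - (x + y) / c then psi (x ^ s) * psi (y ^ s) * psi (z ^ s) * Q else 0)"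
  proof (intro sum.cong refl)
    fix x y z :: 'a
    have "(x + y + c * z = 0) = (z = - (x + y) / c)" using c
      by (auto simp: field_simps) (metis add.commute eq_neg_iff_add_eq_0)+
    then show "psi (x ^ s) * psi (y ^ s) * psi (z ^ s) * (if x + y + c * z = 0 then Q else 0) = (if z = - (x + y) / c then psi (x ^ s) * psi (y ^ s) * psi (z ^ s) * Q else 0)"
      by simp
  qed
  also have "\<dots> = (\<Sum>x\<in>UNIV. \<Sum>y\<in>UNIV. psi (x ^ s) * psi (y ^ s) * psi ((- (x + y) / c) ^ s) * Q)"
    by (simp add: sum.delta)
  also have "\<dots> = Q * (\<Sum>x\<in>UNIV. \<Sum>y\<in>UNIV. psi (x ^ s) * psi (y ^ s) * psi ((- (x + y) / c) ^ s))"
    by (simp add: sum_distrib_left mult.commute)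
  finally show ?thesis unfolding Q_def .
qed

lemma count_sum: "(\<Sum>v\<in>UNIV. if P (v::'a) then (Q::complex) else 0) = of_nat (card {v. P v}) * Q"
proof -
  have "(\<Sum>v\<in>UNIV. if P (v::'a) then Q else 0) = (\<Sum>v\<in>{v \<in> UNIV. P v}. Q)"
    using sum.inter_filter[of UNIV "\<lambda>_. Q" P] by simp
  then show ?thesis by simp
qed

lemma Hsum:
  "(\<Sum>x\<in>UNIV. \<Sum>y\<in>UNIV. psi ((x::'a) ^ s + y ^ s + e * (x + y) ^ s))
   = of_nat CARD('a) * of_nat (card {v::'a. v ^ s + (1 - v) ^ s + e = 0})"
proof -
  define Q :: complex where "Q = of_nat CARD('a)"
  define C where "C v = v ^ s + (1 - v) ^ s + e" for v :: 'a
  define G where "G x w = psi (x ^ s + (w - x) ^ s + e * w ^ s)" for x w :: 'a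
  have "(\<Sum>x\<in>UNIV. \<Sum>y\<in>UNIV. psi ((x::'a) ^ s + y ^ s + e * (x + y) ^ s)) = (\<Sum>x\<in>UNIV. \<Sum>w\<in>UNIV. G x w)"
  proof (rule sum.cong[OF refl])
    fix x :: 'a
    show "(\<Sum>y\<in>UNIV. psi (x ^ s + y ^ s + e * (x + y) ^ s)) = (\<Sum>w\<in>UNIV. G x w)"
      by (rule sum.reindex_bij_witness[of _ "\<lambda>w. w - x" "\<lambda>y. x + y"]) (auto simp: G_def)
  qed
  also have "\<dots> = (\<Sum>w\<in>UNIV. \<Sum>x\<in>UNIV. G x w)" by (rule sum.swap)
  also have "\<dots> = (\<Sum>x\<in>UNIV. G x 0) + (\<Sum>w\<in>UNIV-{0}. \<Sum>x\<in>UNIV. G x w)"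
    by (rule sum.remove) auto
  also have "(\<Sum>x\<in>UNIV. G x 0) = Q"
  proof -
    have "G x 0 = 1" for x
      unfolding G_def using neg_pow[of x] by (simp add: psi_0 zero_power[OF s0])
    then show ?thesis by (simp add: Q_def)
  qed
  also have "(\<Sum>w\<in>UNIV-{0}. \<Sum>x\<in>UNIV. G x w) = (\<Sum>w\<in>UNIV-{0}. \<Sum>v\<in>UNIV. psi (C v * w ^ s))"
  proof (rule sum.cong[OF refl])
    fix w :: 'a assume "w \<in> UNIV - {0}"
    then have w: "w \<noteq> 0" by simp
    have "(\<Sum>x\<in>UNIV. G x w) = (\<Sum>v\<in>UNIV. G (w * v) w)" by (rule sum_scale[OF w, symmetric])
    also have "\<dots> = (\<Sum>v\<in>UNIV. psi (C v * w ^ s))"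
    proof (intro sum.cong refl)
      fix v :: 'a
      have "w - w * v = w * (1 - v)" by (simp add: algebra_simps)
      then have h: "(w - w * v) ^ s = w ^ s * (1 - v) ^ s" by (simp only: power_mult_distrib)
      show "G (w * v) w = psi (C v * w ^ s)"
        unfolding G_def C_def h by (simp add: power_mult_distrib algebra_simps)
    qed
    finally show "(\<Sum>x\<in>UNIV. G x w) = (\<Sum>v\<in>UNIV. psi (C v * w ^ s))" .
  qed
  also have "\<dots> = (\<Sum>v\<in>UNIV. \<Sum>w\<in>UNIV-{0}. psi (C v * w ^ s))" by (rule sum.swap)
  also have "\<dots> = (\<Sum>v\<in>UNIV. (if C v = 0 then Q else 0) - 1)"
  proof (intro sum.cong refl)
    fix v :: 'a
    have "(\<Sum>w\<in>UNIV. psi (C v * w ^ s)) = psi (C v * 0 ^ s) + (\<Sum>w\<in>UNIV-{0}. psi (C v * w ^ s))"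
      by (rule sum.remove) auto
    then have "(\<Sum>w\<in>UNIV-{0}. psi (C v * w ^ s)) = (\<Sum>w\<in>UNIV. psi (C v * w ^ s)) - 1"
      by (simp add: psi_0 zero_power[OF s0])
    then show "(\<Sum>w\<in>UNIV-{0}. psi (C v * w ^ s)) = (if C v = 0 then Q else 0) - 1"
      by (simp only: gauss0 Q_def)
  qed
  also have "\<dots> = of_nat (card {v. C v = 0}) * Q - Q"
    by (simp add: sum_subtractf count_sum Q_def)
  finally show ?thesis by (simp add: Q_def C_def algebra_simps)
qed

lemma Q11_eq: "Q11 s 1 b = card {v::'a. v ^ s + (1 - v) ^ s = b ^ s}"
proof -
  have iff: "(z ^ sinv TYPE('a) s = b) = (z = b ^ s)" for z :: 'a
    using pow_inv1 pow_inv2 by metis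
  have "{(v1, v2). (v1::'a) + v2 = 1 \<and> (v1 ^ s + v2 ^ s) ^ sinv TYPE('a) s = b}
      = (\<lambda>v. (v, 1 - v)) ` {v::'a. v ^ s + (1 - v) ^ s = b ^ s}"
    by (auto simp: iff image_iff) (metis add_diff_cancel_left')+
  moreover have "inj_on (\<lambda>v::'a. (v, 1 - v)) X" for X by (auto simp: inj_on_def)
  ultimately show ?thesis unfolding Q11_def by (simp add: card_image)
qed


lemma cube1: "(\<Sum>u\<in>UNIV. W s u * W s u * W s (1 * (u::'a))) = of_nat CARD('a) ^ 2 * of_nat (Q11 s (1::'a) 1)"
proof -
  have "(\<Sum>u\<in>UNIV. W s u * W s u * W s (1 * (u::'a)))
      = of_nat CARD('a) * (\<Sum>x\<in>UNIV. \<Sum>y\<in>UNIV. psi ((x::'a) ^ s + y ^ s + (-1) * (x + y) ^ s))"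
  proof -
    have "psi (x ^ s) * psi (y ^ s) * psi ((- (x + y) / 1) ^ s) = psi ((x::'a) ^ s + y ^ s + (-1) * (x + y) ^ s)" for x y
    proof -
      have e: "(- (x + y) / 1) ^ s = (-1) * (x + y) ^ s" using neg_pow[of "x + y"] by simp
      show ?thesis by (simp only: e psi_add)
    qed
    then show ?thesis using sum3[of 1] by simp
  qed
  also have "\<dots> = of_nat CARD('a) * (of_nat CARD('a) * of_nat (card {v::'a. v ^ s + (1 - v) ^ s + (-1) = 0}))"
    by (simp only: Hsum)
  also have "{v::'a. v ^ s + (1 - v) ^ s + (-1) = 0} = {v::'a. v ^ s + (1 - v) ^ s = 1 ^ s}"
    by simp
  finally show ?thesis by (simp add: Q11_eq power2_eq_square)
qed

lemma cube2: "(\<Sum>u\<in>UNIV. W s u * W s u * W s ((-1) * (u::'a))) = of_nat CARD('a) ^ 2 * of_nat (Q11 s (1::'a) (-1))"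
proof -
  have "(\<Sum>u\<in>UNIV. W s u * W s u * W s ((-1) * (u::'a)))
      = of_nat CARD('a) * (\<Sum>x\<in>UNIV. \<Sum>y\<in>UNIV. psi ((x::'a) ^ s + y ^ s + 1 * (x + y) ^ s))"
  proof -
    have "psi (x ^ s) * psi (y ^ s) * psi ((- (x + y) / (-1)) ^ s) = psi ((x::'a) ^ s + y ^ s + 1 * (x + y) ^ s)" for x y
    proof -
      have e: "(- (x + y) / (-1)) ^ s = 1 * (x + y) ^ s" by (simp add: add.commute)
      show ?thesis by (simp only: e psi_add)
    qed
    then show ?thesis using sum3[of "-1"] by simp
  qed
  also have "\<dots> = of_nat CARD('a) * (of_nat CARD('a) * of_nat (card {v::'a. v ^ s + (1 - v) ^ s + 1 = 0}))"
    by (simp only: Hsum)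
  also have "{v::'a. v ^ s + (1 - v) ^ s + 1 = 0} = {v::'a. v ^ s + (1 - v) ^ s = (-1) ^ s}"
    by (simp add: neg1_pow add_eq_0_iff2)
  finally show ?thesis by (simp add: Q11_eq power2_eq_square)
qed

lemma Q11_0: "Q11 s (1::'a) 0 = 0"
proof -
  have "{v::'a. v ^ s + (1 - v) ^ s = 0 ^ s} = {}"
  proof (safe)
    fix v :: 'a assume "v ^ s + (1 - v) ^ s = 0 ^ s"
    then have "(1 - v) ^ s = (- v) ^ s" using s0 by (simp add: neg_pow add_eq_0_iff2 eq_neg_iff_add_eq_0 add.commute)
    then have "1 - v = - v" by (simp only: pow_inj)
    then show "v \<in> {}" by simp
  qed
  then show ?thesis by (simp add: Q11_eq)
qed

end


theorem lemma5p17: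
  fixes s k :: nat and lam :: "'a::{field,finite}"
  assumes "s > 0" and "coprime s (CARD('a) - 1)"
    and "k > 0" and "[CHAR('a) = 1] (mod k)"
    and "lam \<in> range of_nat" and "lam ^ k = 1" and "\<forall>i. 0 < i \<and> i < k \<longrightarrow> lam ^ i \<noteq> 1"
  shows "(\<Sum>u\<in>UNIV - {0}. (Omega s k lam u) ^ 0) = of_nat (CARD('a) - 1)
    \<and> (\<Sum>u\<in>UNIV - {0}. Omega s k lam u) = of_nat (k * CARD('a))
    \<and> (\<Sum>u\<in>UNIV - {0}. (Omega s k lam u) ^ 2) = of_nat (k * CARD('a) ^ 2)
    \<and> (k = 2 \<longrightarrow> (\<Sum>u\<in>UNIV - {0}. (Omega s k lam u) ^ 3)
           = 2 * of_nat (CARD('a) ^ 2) * (of_int (V11 s (1::'a)) + 3 * of_int (V11 s (-1::'a))))"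
proof -
  note s0 = assms(1) and cop = assms(2) and k0 = assms(3)
  define Q :: complex where "Q = of_nat CARD('a)"
  have lam0: "lam \<noteq> 0" using assms(6) k0 by (metis power_0_left zero_neq_one neq0_conv)
  have lamp: "lam ^ i \<noteq> 0" for i using lam0 by simp
  have laminj: "i = j" if "i < k" "j < k" "lam ^ i = lam ^ j" for i j
  proof (rule ccontr)
    assume ne: "i \<noteq> j"
    have key: "lam ^ (b - a) = 1" if "a < b" "lam ^ a = lam ^ b" for a b
    proof -
      have "lam ^ a * lam ^ (b - a) = lam ^ (a + (b - a))" by (simp only: power_add)
      also have "a + (b - a) = b" using that by simp
      finally have "lam ^ a * lam ^ (b - a) = lam ^ a * 1" using that by simp
      then show ?thesis using lam0 by simp
    qed
    show False
    proof (cases "i < j")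
      case True
      then show False using key[of i j] that assms(7) by auto
    next
      case False
      then have "j < i" using ne by simp
      then show False using key[of j i] that assms(7) by auto
    qed
  qed
  have W0': "W s (0::'a) = 0" using W0[OF s0 cop] .
  have Om0: "Omega s k lam (0::'a) = 0" by (simp add: Omega_def W0')
  have nz: "(\<Sum>u\<in>UNIV - {0}. (Omega s k lam u) ^ m) = (\<Sum>u\<in>UNIV. (Omega s k lam u) ^ m)" if "m > 0" for m
    by (rule sum_nz[OF s0 cop]) (simp add: Om0 that)
  have scale: "(\<Sum>u\<in>UNIV. f (c * u)) = (\<Sum>u\<in>UNIV. f u)" if "(c::'a) \<noteq> 0" for f :: "'a \<Rightarrow> complex" and c
    by (rule sum_scale[OF s0 cop that])
  have P1: "(\<Sum>u\<in>UNIV - {0}. (Omega s k lam u) ^ 0) = of_nat (CARD('a) - 1)"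
    by simp
  have P2: "(\<Sum>u\<in>UNIV - {0}. Omega s k lam u) = of_nat (k * CARD('a))"
  proof -
    have "(\<Sum>u\<in>UNIV - {0}. Omega s k lam u) = (\<Sum>u\<in>UNIV - {0}. (Omega s k lam u) ^ 1)" by simp
    also have "\<dots> = (\<Sum>u\<in>UNIV. Omega s k lam u)" using nz[of 1] by simp
    also have "\<dots> = (\<Sum>i<k. \<Sum>u\<in>UNIV. W s (lam ^ i * u))"
      unfolding Omega_def by (rule sum.swap)
    also have "\<dots> = (\<Sum>i<k. Q)"
      using scale[OF lamp, of "W s"] sum1[OF s0 cop] by (simp add: Q_def)
    finally show ?thesis by (simp add: Q_def)
  qed
  have P3: "(\<Sum>u\<in>UNIV - {0}. (Omega s k lam u) ^ 2) = of_nat (k * CARD('a) ^ 2)"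
  proof -
    have "(\<Sum>u\<in>UNIV - {0}. (Omega s k lam u) ^ 2) = (\<Sum>u\<in>UNIV. (Omega s k lam u) ^ 2)" using nz[of 2] by simp
    also have "\<dots> = (\<Sum>u\<in>UNIV. \<Sum>i<k. \<Sum>j<k. W s (lam ^ i * u) * W s (lam ^ j * u))"
      unfolding Omega_def power2_eq_square sum_product ..
    also have "\<dots> = (\<Sum>i<k. \<Sum>u\<in>UNIV. \<Sum>j<k. W s (lam ^ i * u) * W s (lam ^ j * u))"
      by (rule sum.swap)
    also have "\<dots> = (\<Sum>i<k. \<Sum>j<k. \<Sum>u\<in>UNIV. W s (lam ^ i * u) * W s (lam ^ j * u))"
      by (intro sum.cong refl sum.swap)
    also have "\<dots> = (\<Sum>i<k. \<Sum>j<k. if i = j then Q ^ 2 else 0)"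
    proof (intro sum.cong refl)
      fix i j assume "i \<in> {..<k}" "j \<in> {..<k}"
      then have "(lam ^ i = lam ^ j) = (i = j)" using laminj by auto
      then show "(\<Sum>u\<in>UNIV. W s (lam ^ i * u) * W s (lam ^ j * u)) = (if i = j then Q ^ 2 else 0)"
        using sum2[OF s0 cop lamp lamp, of i j] by (simp add: Q_def)
    qed
    also have "\<dots> = of_nat k * Q ^ 2" by simp
    finally show ?thesis by (simp add: Q_def)
  qed
  have P4: "(\<Sum>u\<in>UNIV - {0}. (Omega s k lam u) ^ 3)
           = 2 * of_nat (CARD('a) ^ 2) * (of_int (V11 s (1::'a)) + 3 * of_int (V11 s (-1::'a)))"
    if k2: "k = 2"
  proof -
    have "lam ^ 2 = 1" using assms(6) k2 by simp
    moreover have "lam \<noteq> 1" using assms(7) k2 by (metis power_one_right one_less_numeral_iff semiring_norm(76) zero_less_one)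
    ultimately have lm: "lam = -1"
    proof -
      assume "lam ^ 2 = 1" "lam \<noteq> 1"
      then have "(lam - 1) * (lam + 1) = 0" by (simp add: algebra_simps power2_eq_square)
      then show "lam = -1" using \<open>lam \<noteq> 1\<close> by (simp add: add_eq_0_iff2)
    qed
    have Om: "Omega s k lam u = W s u + W s ((-1) * u)" for u
      unfolding Omega_def k2 lm by (simp add: numeral_2_eq_2)
    define A where "A = (\<Sum>u\<in>UNIV. W s u * W s u * W s (1 * (u::'a)))"
    define B where "B = (\<Sum>u\<in>UNIV. W s u * W s u * W s ((-1) * (u::'a)))"
    have cube: "(x + y) ^ 3 = x * x * x + 3 * (x * x * y) + 3 * (x * y * y) + y * y * y" for x y :: complex
      by (simp add: power3_eq_cube algebra_simps)
    have "(\<Sum>u\<in>UNIV - {0}. (Omega s k lam u) ^ 3) = (\<Sum>u\<in>UNIV. (Omega s k lam u) ^ 3)" using nz[of 3] by simp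
    also have "\<dots> = (\<Sum>u\<in>UNIV. W s u * W s u * W s (u::'a)) + 3 * (\<Sum>u\<in>UNIV. W s u * W s u * W s ((-1) * (u::'a)))
        + 3 * (\<Sum>u\<in>UNIV. W s u * W s ((-1) * u) * W s ((-1) * (u::'a))) + (\<Sum>u\<in>UNIV. W s ((-1) * u) * W s ((-1) * u) * W s ((-1) * (u::'a)))"
      unfolding Om cube by (simp add: sum.distrib sum_distrib_left)
    also have "(\<Sum>u\<in>UNIV. W s ((-1) * u) * W s ((-1) * u) * W s ((-1) * (u::'a))) = A"
      unfolding A_def using scale[of "-1" "\<lambda>u. W s u * W s u * W s u"] by simp
    also have "(\<Sum>u\<in>UNIV. W s u * W s ((-1) * u) * W s ((-1) * (u::'a))) = B"
      unfolding B_def using scale[of "-1" "\<lambda>u. W s ((-1) * u) * W s u * W s u"] by (simp add: mult_ac)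
    also have "(\<Sum>u\<in>UNIV. W s u * W s u * W s (u::'a)) = A" unfolding A_def by simp
    also have "(\<Sum>u\<in>UNIV. W s u * W s u * W s ((-1) * (u::'a))) = B" unfolding B_def ..
    also have "A = Q ^ 2 * of_nat (Q11 s (1::'a) 1)" unfolding A_def Q_def by (rule cube1[OF s0 cop])
    also have "B = Q ^ 2 * of_nat (Q11 s (1::'a) (-1))" unfolding B_def Q_def by (rule cube2[OF s0 cop])
    finally have "(\<Sum>u\<in>UNIV - {0}. (Omega s k lam u) ^ 3)
        = 2 * Q ^ 2 * (of_nat (Q11 s (1::'a) 1) + 3 * of_nat (Q11 s (1::'a) (-1)))"
      by (simp add: algebra_simps)
    moreover have "V11 s (1::'a) = int (Q11 s (1::'a) 1)" "V11 s (-1::'a) = int (Q11 s (1::'a) (-1))"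
      by (simp_all add: V11_def Q11_0[OF s0 cop])
    ultimately show ?thesis by (simp add: Q_def)
  qed
  show ?thesis using P1 P2 P3 P4 by blast
qed

end
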